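(* Let $G$ be a graph with $\alpha(G)\geq d\geq 2$ and let $v$ be a vertex of $G$. Write $\mathrm{del}(v)=\{\tau\in\Delta_d^t(G): v\notin\tau\}$. (a) If $\alpha(G-v)\leq d-1$, then $\mathrm{del}(v)=\Delta_d^t(G)=\Delta^{N_G(v)}*\Delta_{d-1}^t(G-N_G[v])$. (b) If $\alpha(G-N_G[v])\leq d-2$, then $\mathrm{del}(v)=\Delta_d^t(G-v)$. (c) If $\alpha(G-v)\geq d$ and $\alpha(G-N_G[v])\geq d-1$, then $$\mathrm{del}(v)=\Delta_d^t(G-v)\cup\left(\Delta^{N_G(v)}*\Delta_{d-1}^t(G-N_G[v])\right).$$
   Context: All graphs are finite and simple; $\alpha(G)$ is the independence number, $G[S]$ the induced subgraph on $S$, $G-S=G[V(G)\setminus S]$, $N_G(v)$ the open and $N_G[v]=N_G(v)\cup\{v\}$ the closed neighborhood. For any integer $e\ge1$, $\Delta_e^t(H)=\{\sigma\subseteq V(H):\ \alpha(H[V(H)\setminus\sigma])\geq e\}$. $\Delta^X=\mathcal{P}(X)$ is the full simplex on $X$ (with $\Delta^\emptyset=\{\emptyset\}$), and for complexes on disjoint vertex sets the join is $K*J=\{\tau\cup\sigma:\tau\in K,\sigma\in J\}$. Complexes are compared as families of subsets of $V(G)$. *)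

theory Defs
  imports Main
begin

definition simple_graph :: "'a set \<Rightarrow> ('a \<Rightarrow> 'a \<Rightarrow> bool) \<Rightarrow> bool" where
  "simple_graph V E \<longleftrightarrow> finite V \<and> (\<forall>x y. E x y \<longrightarrow> E y x) \<and> (\<forall>x. \<not> E x x)"

definition indep_set :: "('a \<Rightarrow> 'a \<Rightarrow> bool) \<Rightarrow> 'a set \<Rightarrow> bool" where
  "indep_set E I \<longleftrightarrow> (\<forall>x\<in>I. \<forall>y\<in>I. x \<noteq> y \<longrightarrow> \<not> E x y)"

definition alpha :: "('a \<Rightarrow> 'a \<Rightarrow> bool) \<Rightarrow> 'a set \<Rightarrow> nat" where
  "alpha E S = Max {card I | I. I \<subseteq> S \<and> indep_set E I}"

definition nbhd :: "'a set \<Rightarrow> ('a \<Rightarrow> 'a \<Rightarrow> bool) \<Rightarrow> 'a \<Rightarrow> 'a set" where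
  "nbhd V E v = {u \<in> V. E v u}"

definition closed_nbhd :: "'a set \<Rightarrow> ('a \<Rightarrow> 'a \<Rightarrow> bool) \<Rightarrow> 'a \<Rightarrow> 'a set" where
  "closed_nbhd V E v = insert v (nbhd V E v)"

text \<open>\<Delta>_e^t(H) for the induced subgraph H on vertex set W.\<close>
definition Delta_t :: "('a \<Rightarrow> 'a \<Rightarrow> bool) \<Rightarrow> 'a set \<Rightarrow> nat \<Rightarrow> 'a set set" where
  "Delta_t E W e = {\<sigma>. \<sigma> \<subseteq> W \<and> alpha E (W - \<sigma>) \<ge> e}"

definition full_simplex :: "'a set \<Rightarrow> 'a set set" where
  "full_simplex X = Pow X"

definition join :: "'a set set \<Rightarrow> 'a set set \<Rightarrow> 'a set set" where
  "join K J = {\<tau> \<union> \<sigma> | \<tau> \<sigma>. \<tau> \<in> K \<and> \<sigma> \<in> J}"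

end

theory Submission
  imports Defs
begin

lemma alpha_ge:
  assumes "finite S"
  shows "(k \<le> alpha E S) \<longleftrightarrow> (\<exists>I. I \<subseteq> S \<and> indep_set E I \<and> k \<le> card I)"
proof -
  let ?M = "{card I | I. I \<subseteq> S \<and> indep_set E I}"
  have fin: "finite ?M"
    by (rule finite_subset[of _ "{..card S}"]) (auto intro: card_mono assms)
  have ne: "0 \<in> ?M" by (auto simp: indep_set_def intro!: exI[of _ "{}"])
  show ?thesis
  proof
    assume "k \<le> alpha E S"
    moreover have "alpha E S \<in> ?M" unfolding alpha_def using fin ne
      by (intro Max_in) auto
    ultimately show "\<exists>I. I \<subseteq> S \<and> indep_set E I \<and> k \<le> card I" by auto
  next
    assume "\<exists>I. I \<subseteq> S \<and> indep_set E I \<and> k \<le> card I"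
    then obtain I where "I \<subseteq> S" "indep_set E I" "k \<le> card I" by auto
    moreover have "card I \<le> alpha E S" unfolding alpha_def using fin
      using \<open>I \<subseteq> S\<close> \<open>indep_set E I\<close> by (intro Max_ge) auto
    ultimately show "k \<le> alpha E S" by simp
  qed
qed

lemma alpha_mono:
  assumes "finite T" "S \<subseteq> T"
  shows "alpha E S \<le> alpha E T"
proof -
  have "finite S" using assms finite_subset by auto
  then obtain I where "I \<subseteq> S" "indep_set E I" "alpha E S \<le> card I"
    using alpha_ge[of S "alpha E S" E] by auto
  then show ?thesis using alpha_ge[OF assms(1), of "alpha E S" E] assms(2) by blast
qed

lemma key:
  assumes "simple_graph V E" "v \<in> V" "v \<notin> \<tau>" "d \<ge> 1"
  shows "(d \<le> alpha E (V - \<tau>)) \<longleftrightarrow>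
     (d \<le> alpha E (V - {v} - \<tau>) \<or> d - 1 \<le> alpha E (V - closed_nbhd V E v - \<tau>))"
proof -
  have fV: "finite V" and sym: "\<And>x y. E x y \<Longrightarrow> E y x" and irr: "\<And>x. \<not> E x x"
    using assms(1) unfolding simple_graph_def by auto
  have f1: "finite (V - \<tau>)" "finite (V - {v} - \<tau>)" "finite (V - closed_nbhd V E v - \<tau>)"
    using fV by auto
  show ?thesis
  proof
    assume "d \<le> alpha E (V - \<tau>)"
    then obtain I where I: "I \<subseteq> V - \<tau>" "indep_set E I" "d \<le> card I"
      using alpha_ge[OF f1(1)] by blast
    show "d \<le> alpha E (V - {v} - \<tau>) \<or> d - 1 \<le> alpha E (V - closed_nbhd V E v - \<tau>)"
    proof (cases "v \<in> I")
      case False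
      then have "I \<subseteq> V - {v} - \<tau>" using I by auto
      then show ?thesis using alpha_ge[OF f1(2)] I by blast
    next
      case True
      have "I - {v} \<subseteq> V - closed_nbhd V E v - \<tau>"
        using I True unfolding indep_set_def closed_nbhd_def nbhd_def by auto
      moreover have "indep_set E (I - {v})" using I(2) unfolding indep_set_def by auto
      moreover have "d - 1 \<le> card (I - {v})" using I True fV
        by (simp add: finite_subset[OF I(1)])
      ultimately show ?thesis using alpha_ge[OF f1(3)] by blast
    qed
  next
    assume "d \<le> alpha E (V - {v} - \<tau>) \<or> d - 1 \<le> alpha E (V - closed_nbhd V E v - \<tau>)"
    then show "d \<le> alpha E (V - \<tau>)"
    proof
      assume "d \<le> alpha E (V - {v} - \<tau>)"
      moreover have "V - {v} - \<tau> \<subseteq> V - \<tau>" by auto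
      ultimately show ?thesis using alpha_mono[OF f1(1), of "V - {v} - \<tau>" E] by linarith
    next
      assume "d - 1 \<le> alpha E (V - closed_nbhd V E v - \<tau>)"
      then obtain J where J: "J \<subseteq> V - closed_nbhd V E v - \<tau>" "indep_set E J" "d - 1 \<le> card J"
        using alpha_ge[OF f1(3)] by blast
      have vJ: "v \<notin> J" using J(1) unfolding closed_nbhd_def by auto
      have fJ: "finite J" using J(1) fV finite_subset by blast
      have "insert v J \<subseteq> V - \<tau>" using J(1) assms(2,3) by auto
      moreover have "indep_set E (insert v J)"
        using J(1,2) sym unfolding indep_set_def closed_nbhd_def nbhd_def by blast
      moreover have "d \<le> card (insert v J)" using J(3) vJ fJ assms(4) by simp
      ultimately show ?thesis using alpha_ge[OF f1(1)] by blast
    qed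
  qed
qed

lemma join_char:
  assumes irr: "\<not> E v v"
  shows "join (full_simplex (nbhd V E v)) (Delta_t E (V - closed_nbhd V E v) k) =
   {\<tau>. \<tau> \<subseteq> V - {v} \<and> k \<le> alpha E (V - closed_nbhd V E v - \<tau>)}"
proof -
  have eq: "\<And>A B. A \<subseteq> nbhd V E v \<Longrightarrow> V - closed_nbhd V E v - (A \<union> B) = V - closed_nbhd V E v - B"
    unfolding closed_nbhd_def by auto
  show ?thesis
  proof (intro set_eqI iffI)
    fix \<tau> assume "\<tau> \<in> join (full_simplex (nbhd V E v)) (Delta_t E (V - closed_nbhd V E v) k)"
    then obtain A B where AB: "\<tau> = A \<union> B" "A \<subseteq> nbhd V E v" "B \<subseteq> V - closed_nbhd V E v"
      "k \<le> alpha E (V - closed_nbhd V E v - B)"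
      unfolding join_def full_simplex_def Delta_t_def by auto
    have "v \<notin> A" using AB(2) irr unfolding nbhd_def by blast
    then have "\<tau> \<subseteq> V - {v}" using AB(1,2,3) unfolding nbhd_def closed_nbhd_def
      by blast
    then show "\<tau> \<in> {\<tau>. \<tau> \<subseteq> V - {v} \<and> k \<le> alpha E (V - closed_nbhd V E v - \<tau>)}"
      using AB eq[OF AB(2), of B] by auto
  next
    fix \<tau> assume "\<tau> \<in> {\<tau>. \<tau> \<subseteq> V - {v} \<and> k \<le> alpha E (V - closed_nbhd V E v - \<tau>)}"
    then have t: "\<tau> \<subseteq> V - {v}" "k \<le> alpha E (V - closed_nbhd V E v - \<tau>)" by auto
    let ?A = "\<tau> \<inter> nbhd V E v" and ?B = "\<tau> - nbhd V E v"
    have "\<tau> = ?A \<union> ?B" by auto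
    moreover have "?B \<subseteq> V - closed_nbhd V E v" using t(1) unfolding closed_nbhd_def by auto
    moreover have "V - closed_nbhd V E v - ?B = V - closed_nbhd V E v - \<tau>"
      unfolding closed_nbhd_def by auto
    ultimately have "?A \<in> full_simplex (nbhd V E v) \<and> ?B \<in> Delta_t E (V - closed_nbhd V E v) k \<and> \<tau> = ?A \<union> ?B"
      using t unfolding full_simplex_def Delta_t_def by auto
    then show "\<tau> \<in> join (full_simplex (nbhd V E v)) (Delta_t E (V - closed_nbhd V E v) k)"
      unfolding join_def by blast
  qed
qed

theorem mainTheorem19:
  fixes V :: "'a set" and E :: "'a \<Rightarrow> 'a \<Rightarrow> bool" and v :: 'a and d :: nat
  assumes "simple_graph V E"
    and "d \<ge> 2" and "alpha E V \<ge> d"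
    and "v \<in> V"
  defines "del \<equiv> {\<tau> \<in> Delta_t E V d. v \<notin> \<tau>}"
  shows "(alpha E (V - {v}) \<le> d - 1 \<longrightarrow>
            del = Delta_t E V d \<and>
            Delta_t E V d = join (full_simplex (nbhd V E v))
                                 (Delta_t E (V - closed_nbhd V E v) (d - 1)))
       \<and> (alpha E (V - closed_nbhd V E v) \<le> d - 2 \<longrightarrow>
            del = Delta_t E (V - {v}) d)
       \<and> (alpha E (V - {v}) \<ge> d \<and> alpha E (V - closed_nbhd V E v) \<ge> d - 1 \<longrightarrow>
            del = Delta_t E (V - {v}) d \<union>
                  join (full_simplex (nbhd V E v))
                       (Delta_t E (V - closed_nbhd V E v) (d - 1)))"
proof -
  have fV: "finite V" using assms(1) unfolding simple_graph_def by auto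
  have irr: "\<not> E v v" using assms(1) unfolding simple_graph_def by auto
  note join_char = join_char[where V=V and E=E and v=v, OF irr]
  have gen: "del = Delta_t E (V - {v}) d \<union>
                  join (full_simplex (nbhd V E v)) (Delta_t E (V - closed_nbhd V E v) (d - 1))"
  proof (rule set_eqI)
    fix \<tau>
    have "\<tau> \<in> del \<longleftrightarrow> \<tau> \<subseteq> V \<and> d \<le> alpha E (V - \<tau>) \<and> v \<notin> \<tau>"
      unfolding del_def Delta_t_def by auto
    moreover have "\<tau> \<in> Delta_t E (V - {v}) d \<union>
                  join (full_simplex (nbhd V E v)) (Delta_t E (V - closed_nbhd V E v) (d - 1))
       \<longleftrightarrow> (\<tau> \<subseteq> V - {v} \<and> d \<le> alpha E (V - {v} - \<tau>)) \<or>
        (\<tau> \<subseteq> V - {v} \<and> d - 1 \<le> alpha E (V - closed_nbhd V E v - \<tau>))"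
      unfolding join_char by (auto simp: Delta_t_def)
    ultimately show "\<tau> \<in> del \<longleftrightarrow> \<tau> \<in> Delta_t E (V - {v}) d \<union>
                  join (full_simplex (nbhd V E v)) (Delta_t E (V - closed_nbhd V E v) (d - 1))"
      using key[OF assms(1,4), of \<tau> d] assms(2) by auto
  qed
  have A: "del = Delta_t E V d \<and>
            Delta_t E V d = join (full_simplex (nbhd V E v))
                                 (Delta_t E (V - closed_nbhd V E v) (d - 1))"
    if h: "alpha E (V - {v}) \<le> d - 1"
  proof -
    have "\<And>\<sigma>. \<not> d \<le> alpha E (V - {v} - \<sigma>)"
    proof
      fix \<sigma> assume "d \<le> alpha E (V - {v} - \<sigma>)"
      moreover have "alpha E (V - {v} - \<sigma>) \<le> alpha E (V - {v})"
        using fV by (intro alpha_mono) auto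
      ultimately show False using h assms(2) by linarith
    qed
    then have e: "Delta_t E (V - {v}) d = {}" unfolding Delta_t_def by auto
    have "v \<notin> \<sigma>" if s1: "\<sigma> \<in> Delta_t E V d" for \<sigma>
    proof
      assume s2: "v \<in> \<sigma>"
      note s = s1 s2
      then have "V - \<sigma> \<subseteq> V - {v}" by auto
      then have "alpha E (V - \<sigma>) \<le> alpha E (V - {v})" using fV by (intro alpha_mono) auto
      then show False using s h assms(2) unfolding Delta_t_def by auto
    qed
    then have "del = Delta_t E V d" unfolding del_def by auto
    then show ?thesis using gen e by auto
  qed
  have B: "del = Delta_t E (V - {v}) d" if h: "alpha E (V - closed_nbhd V E v) \<le> d - 2"
  proof -
    have "\<And>\<tau>. \<not> d - 1 \<le> alpha E (V - closed_nbhd V E v - \<tau>)"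
    proof
      fix \<tau> assume "d - 1 \<le> alpha E (V - closed_nbhd V E v - \<tau>)"
      moreover have "alpha E (V - closed_nbhd V E v - \<tau>) \<le> alpha E (V - closed_nbhd V E v)"
        using fV by (intro alpha_mono) auto
      ultimately show False using h assms(2) by linarith
    qed
    then show ?thesis using gen unfolding join_char by auto
  qed
  show ?thesis using A B gen by blast
qed

end
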